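(* Let $M$ be a simple binary matroid and $C$ a circuit of $M$. The following are equivalent: (1) $C\notin B_M$; (2) there are circuits $C_1,C_2$ of $M$ such that $|C_1\cap C_2|=1$ and $C_1\triangle C_2=C$.
   Context: A matroid $M=([n],\mathscr C)$ is given by its circuit set $\mathscr C$. It is simple if every circuit has cardinality greater than $2$, and binary if it is representable over $\mathbb F_2$. Let ${\bf TP}^{n-1}$ be the tropical projective space over $(\mathbb R\cup\{-\infty\},\max,+)$. For a circuit $C$, $V(C)$ is the set of $x\in{\bf TP}^{n-1}$ such that $\max\{x_i:i\in C\}$ is attained at least twice. For $B\subseteq\mathscr C$, set $V(B)=\bigcap_{C\in B}V(C)$. A subset $B\subseteq\mathscr C$ is a tropical basis if $V(B)=V(\mathscr C)$. $B_M$ denotes the intersection of all tropical bases of $M$. $\triangle$ denotes symmetric difference. *)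

theory Defs
  imports Main "HOL-Library.Z2" "HOL-Library.Extended_Real"
begin

definition matroid_circuits :: "nat \<Rightarrow> nat set set \<Rightarrow> bool" where
  "matroid_circuits n \<C> \<longleftrightarrow>
     (\<forall>C\<in>\<C>. C \<subseteq> {1..n}) \<and>
     {} \<notin> \<C> \<and>
     (\<forall>C1\<in>\<C>. \<forall>C2\<in>\<C>. C1 \<subseteq> C2 \<longrightarrow> C1 = C2) \<and>
     (\<forall>C1\<in>\<C>. \<forall>C2\<in>\<C>. \<forall>e. C1 \<noteq> C2 \<and> e \<in> C1 \<inter> C2 \<longrightarrow>
        (\<exists>C3\<in>\<C>. C3 \<subseteq> (C1 \<union> C2) - {e}))"

definition simple_matroid :: "nat set set \<Rightarrow> bool" where
  "simple_matroid \<C> \<longleftrightarrow> (\<forall>C\<in>\<C>. card C > 2)"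

text \<open>Linear dependence over GF(2) of the family of vectors v i (i in S),
  vectors in GF(2)^m being represented by their coordinate functions.
  Over GF(2), a family is dependent iff some nonempty subfamily sums to zero.\<close>

definition f2_dependent :: "nat \<Rightarrow> (nat \<Rightarrow> nat \<Rightarrow> bit) \<Rightarrow> nat set \<Rightarrow> bool" where
  "f2_dependent m v S \<longleftrightarrow>
     (\<exists>T. T \<subseteq> S \<and> T \<noteq> {} \<and> (\<forall>j<m. (\<Sum>i\<in>T. v i j) = 0))"

definition binary_matroid :: "nat \<Rightarrow> nat set set \<Rightarrow> bool" where
  "binary_matroid n \<C> \<longleftrightarrow>
     (\<exists>m. \<exists>v :: nat \<Rightarrow> nat \<Rightarrow> bit.
        \<C> = {C. C \<subseteq> {1..n} \<and> f2_dependent m v C \<and>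
                 (\<forall>D. D \<subset> C \<longrightarrow> \<not> f2_dependent m v D)})"

text \<open>Points of the tropical projective space TP^(n-1), represented by
  representatives x : [n] -> R \<union> {-\<infinity>}, not all -\<infinity>
  (all sets below are invariant under tropical scaling).\<close>

definition TP :: "nat \<Rightarrow> (nat \<Rightarrow> ereal) set" where
  "TP n = {x. (\<forall>i\<in>{1..n}. x i \<noteq> \<infinity>) \<and> (\<exists>i\<in>{1..n}. x i \<noteq> -\<infinity>)
             \<and> (\<forall>i. i \<notin> {1..n} \<longrightarrow> x i = -\<infinity>)}"

definition Vcirc :: "nat \<Rightarrow> nat set \<Rightarrow> (nat \<Rightarrow> ereal) set" where
  "Vcirc n C = {x \<in> TP n. \<exists>i\<in>C. \<exists>j\<in>C. i \<noteq> j \<and>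
                   x i = Max (x ` C) \<and> x j = Max (x ` C)}"

definition Vset :: "nat \<Rightarrow> nat set set \<Rightarrow> (nat \<Rightarrow> ereal) set" where
  "Vset n B = {x \<in> TP n. \<forall>C\<in>B. x \<in> Vcirc n C}"

definition tropical_basis :: "nat \<Rightarrow> nat set set \<Rightarrow> nat set set \<Rightarrow> bool" where
  "tropical_basis n \<C> B \<longleftrightarrow> B \<subseteq> \<C> \<and> Vset n B = Vset n \<C>"

definition BM :: "nat \<Rightarrow> nat set set \<Rightarrow> nat set set" where
  "BM n \<C> = \<Inter> {B. tropical_basis n \<C> B}"

end

theory Submission
  imports Defs
begin

lemma bit_self_add: "(a::bit) + a = 0"
  by (cases a) auto

lemma sum_symdiff_bit:
  fixes f :: "nat \<Rightarrow> bit"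
  assumes "finite A" "finite B"
  shows "(\<Sum>i\<in>(A - B) \<union> (B - A). f i) = (\<Sum>i\<in>A. f i) + (\<Sum>i\<in>B. f i)"
proof -
  have 1: "(\<Sum>i\<in>(A - B) \<union> (B - A). f i) = (\<Sum>i\<in>A - B. f i) + (\<Sum>i\<in>B - A. f i)"
    using assms by (intro sum.union_disjoint) auto
  have 2: "(\<Sum>i\<in>A. f i) = (\<Sum>i\<in>A - B. f i) + (\<Sum>i\<in>A \<inter> B. f i)"
    by (subst add.commute) (rule sum.Int_Diff[OF assms(1)])
  have 3: "(\<Sum>i\<in>B. f i) = (\<Sum>i\<in>B - A. f i) + (\<Sum>i\<in>A \<inter> B. f i)"
    by (subst add.commute, subst Int_commute) (rule sum.Int_Diff[OF assms(2)])
  have 4: "\<And>a b c :: bit. a + b = (a + c) + (b + c)"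
  proof -
    fix a b c :: bit
    have "(a + c) + (b + c) = a + b + (c + c)" by (simp only: ac_simps)
    also have "\<dots> = a + b" by (simp only: bit_self_add add_0_right)
    finally show "a + b = (a + c) + (b + c)" by simp
  qed
  show ?thesis unfolding 1 2 3 by (rule 4)
qed

lemma min_dep:
  assumes "finite S" "f2_dependent m v S"
  shows "\<exists>T\<subseteq>S. f2_dependent m v T \<and> (\<forall>D. D \<subset> T \<longrightarrow> \<not> f2_dependent m v D)"
  using assms
proof (induction S rule: finite_psubset_induct)
  case (psubset A)
  show ?case
  proof (cases "\<exists>D. D \<subset> A \<and> f2_dependent m v D")
    case True
    then obtain D where D1: "D \<subset> A" and D2: "f2_dependent m v D" by blast
    from psubset.IH[OF D1 D2] obtain T where T: "T \<subseteq> D" "f2_dependent m v T"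
      "\<forall>D. D \<subset> T \<longrightarrow> \<not> f2_dependent m v D" by blast
    have "T \<subseteq> A" using T(1) D1 by (rule subset_psubset_trans[THEN psubset_imp_subset])
    then show ?thesis using T(2,3) by (intro exI[of _ T] conjI)
  next
    case False
    then have "\<forall>D. D \<subset> A \<longrightarrow> \<not> f2_dependent m v D" by simp
    then show ?thesis using psubset.prems by (intro exI[of _ A] conjI) simp_all
  qed
qed

lemma bin_symdiff:
  assumes "binary_matroid n \<C>" "C1 \<in> \<C>" "C2 \<in> \<C>" "C1 \<noteq> C2"
  shows "\<exists>C3\<in>\<C>. C3 \<subseteq> (C1 - C2) \<union> (C2 - C1)"
proof -
  obtain m v where eq: "\<C> = {C. C \<subseteq> {1..n} \<and> f2_dependent m v C \<and>
                 (\<forall>D. D \<subset> C \<longrightarrow> \<not> f2_dependent m v D)}"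
    using assms(1) unfolding binary_matroid_def by blast
  have sum0: "\<forall>j<m. (\<Sum>i\<in>C. v i j) = 0" if "C \<in> \<C>" for C
  proof -
    from that eq have d: "f2_dependent m v C" and mn: "\<forall>D. D \<subset> C \<longrightarrow> \<not> f2_dependent m v D"
      by auto
    from d obtain T where T: "T \<subseteq> C" "T \<noteq> {}" "\<forall>j<m. (\<Sum>i\<in>T. v i j) = 0"
      unfolding f2_dependent_def by blast
    have "f2_dependent m v T" using T unfolding f2_dependent_def by blast
    with mn T(1) have "T = C" by blast
    with T show ?thesis by simp
  qed
  have fin: "finite C1" "finite C2" using assms(2,3) eq by (auto intro: finite_subset)
  let ?S = "(C1 - C2) \<union> (C2 - C1)"
  have ne: "?S \<noteq> {}" using assms(4) by blast
  have "\<forall>j<m. (\<Sum>i\<in>?S. v i j) = 0"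
    using sum_symdiff_bit[OF fin] sum0[OF assms(2)] sum0[OF assms(3)] by simp
  hence dS: "f2_dependent m v ?S" unfolding f2_dependent_def using ne by blast
  have "finite ?S" using fin by simp
  from min_dep[OF this dS] obtain T where T: "T \<subseteq> ?S" "f2_dependent m v T"
    "\<forall>D. D \<subset> T \<longrightarrow> \<not> f2_dependent m v D" by blast
  have "T \<subseteq> {1..n}" using T(1) assms(2,3) eq by blast
  with T have "T \<in> \<C>" using eq by blast
  with T(1) show ?thesis by blast
qed

lemma notV:
  assumes "x \<in> TP n" "finite D" "D \<noteq> {}"
  shows "x \<notin> Vcirc n D \<longleftrightarrow> (\<exists>a\<in>D. \<forall>b\<in>D. b \<noteq> a \<longrightarrow> x b < x a)"
proof
  assume nv: "x \<notin> Vcirc n D"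
  have "Max (x ` D) \<in> x ` D" using assms by simp
  then obtain a where a: "a \<in> D" "x a = Max (x ` D)" by auto
  have "\<forall>b\<in>D. b \<noteq> a \<longrightarrow> x b < x a"
  proof (intro ballI impI)
    fix b assume b: "b \<in> D" "b \<noteq> a"
    have "x b \<le> Max (x ` D)" using assms b by simp
    moreover have "x b \<noteq> Max (x ` D)"
      using nv a b assms(1) unfolding Vcirc_def by auto
    ultimately show "x b < x a" using a by simp
  qed
  with a show "\<exists>a\<in>D. \<forall>b\<in>D. b \<noteq> a \<longrightarrow> x b < x a" by blast
next
  assume "\<exists>a\<in>D. \<forall>b\<in>D. b \<noteq> a \<longrightarrow> x b < x a"
  then obtain a where a: "a \<in> D" "\<forall>b\<in>D. b \<noteq> a \<longrightarrow> x b < x a" by blast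
  show "x \<notin> Vcirc n D"
  proof
    assume "x \<in> Vcirc n D"
    then obtain i j where ij: "i \<in> D" "j \<in> D" "i \<noteq> j" "x i = Max (x ` D)" "x j = Max (x ` D)"
      unfolding Vcirc_def by blast
    have "x a \<le> Max (x ` D)" using assms a by simp
    then show False using ij a
      by (metis not_le)
  qed
qed

lemma dir2_aux:
  assumes "C1 \<inter> C2 = {e}" "(C1 - C2) \<union> (C2 - C1) = C" "a \<in> C1 - C2"
    "\<forall>b\<in>C. b \<noteq> a \<longrightarrow> x b < x a" "x \<in> Vcirc n C1" "x \<in> Vcirc n C2"
    "finite C1" "finite C2"
  shows False
proof -
  obtain p q where pq: "p \<in> C1" "q \<in> C1" "p \<noteq> q" "x p = Max (x ` C1)" "x q = Max (x ` C1)"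
    using assms(5) unfolding Vcirc_def by blast
  have m1: "x a \<le> Max (x ` C1)" using assms(3,7) by simp
  have xe: "x e = x a"
  proof -
    have "p = a \<or> p = e"
    proof (rule ccontr)
      assume "\<not> (p = a \<or> p = e)"
      then have "p \<in> C" "p \<noteq> a" using pq assms(1,2) by auto
      then show False using assms(4) pq m1 by force
    qed
    moreover have "q = a \<or> q = e"
    proof (rule ccontr)
      assume "\<not> (q = a \<or> q = e)"
      then have "q \<in> C" "q \<noteq> a" using pq assms(1,2) by auto
      then show False using assms(4) pq m1 by force
    qed
    ultimately show ?thesis using pq by auto
  qed
  obtain p' q' where pq': "p' \<in> C2" "q' \<in> C2" "p' \<noteq> q'" "x p' = Max (x ` C2)" "x q' = Max (x ` C2)"
    using assms(6) unfolding Vcirc_def by blast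
  have e2: "e \<in> C2" using assms(1) by auto
  have m2: "x a \<le> Max (x ` C2)" using e2 assms(8) xe by (metis Max_ge finite_imageI imageI)
  obtain r where r: "r \<in> C2" "r \<noteq> e" "x r = Max (x ` C2)" using pq' by metis
  have "r \<in> C" "r \<noteq> a" using r assms(1,2,3) by auto
  then show False using assms(4) r m2 by force
qed

theorem proposition4:
  fixes n :: nat and \<C> :: "nat set set" and C :: "nat set"
  assumes "matroid_circuits n \<C>"
    and "binary_matroid n \<C>"
    and "simple_matroid \<C>"
    and "C \<in> \<C>"
  shows "C \<notin> BM n \<C> \<longleftrightarrow>
         (\<exists>C1\<in>\<C>. \<exists>C2\<in>\<C>. card (C1 \<inter> C2) = 1 \<and> (C1 - C2) \<union> (C2 - C1) = C)"
proof
  have mc: "(\<forall>D\<in>\<C>. D \<subseteq> {1..n}) \<and> {} \<notin> \<C> \<and> (\<forall>D\<in>\<C>. \<forall>E\<in>\<C>. D \<subseteq> E \<longrightarrow> D = E)"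
    using assms(1)[unfolded matroid_circuits_def] by (elim conjE) (intro conjI)
  have sub: "\<And>D. D \<in> \<C> \<Longrightarrow> D \<subseteq> {1..n}" using mc by blast
  have fin: "\<And>D. D \<in> \<C> \<Longrightarrow> finite D" using sub by (meson finite_atLeastAtMost finite_subset)
  have nemp: "\<And>D. D \<in> \<C> \<Longrightarrow> D \<noteq> {}" using mc by blast
  have inc: "\<And>D E. D \<in> \<C> \<Longrightarrow> E \<in> \<C> \<Longrightarrow> D \<subseteq> E \<Longrightarrow> D = E"
    using mc by blast
  have card3: "\<And>D. D \<in> \<C> \<Longrightarrow> card D > 2" using assms(3) unfolding simple_matroid_def by blast
  {
    assume "C \<notin> BM n \<C>"
    then obtain B where B: "tropical_basis n \<C> B" "C \<notin> B" unfolding BM_def by blast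
    obtain i where i: "i \<in> C" using nemp[OF assms(4)] by blast
    define x :: "nat \<Rightarrow> ereal" where
      "x = (\<lambda>k. if k \<in> {1..n} then (if k \<in> C \<and> k \<noteq> i then 0 else 1) else -\<infinity>)"
    have Ci: "C \<subseteq> {1..n}" using sub assms(4) by blast
    have xTP: "x \<in> TP n" unfolding TP_def
    proof (intro CollectI conjI)
      show "\<exists>k\<in>{1..n}. x k \<noteq> - \<infinity>" using i Ci by (intro bexI[of _ i]) (auto simp: x_def)
    qed (auto simp: x_def)
    have "x \<notin> Vcirc n C"
      unfolding notV[OF xTP fin[OF assms(4)] nemp[OF assms(4)]]
      using i Ci unfolding x_def by (intro bexI[of _ i]) auto
    hence "x \<notin> Vset n \<C>" using assms(4) unfolding Vset_def by blast
    hence "x \<notin> Vset n B" using B(1) unfolding tropical_basis_def by simp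
    then obtain D where D: "D \<in> B" "x \<notin> Vcirc n D" using xTP unfolding Vset_def by blast
    have DC: "D \<in> \<C>" using D B unfolding tropical_basis_def by blast
    have DneC: "D \<noteq> C" using D B by blast
    obtain a where a: "a \<in> D" "\<forall>b\<in>D. b \<noteq> a \<longrightarrow> x b < x a"
      using D(2) notV[OF xTP fin[OF DC] nemp[OF DC]] by blast
    have Dsub: "D \<subseteq> {1..n}" using sub DC by blast
    obtain b0 where b0: "b0 \<in> D" "b0 \<noteq> a"
    proof -
      have "D \<noteq> {a}" using card3[OF DC] by auto
      then show ?thesis using that a(1) by blast
    qed
    have xa: "x a = 1"
    proof (rule ccontr)
      assume "x a \<noteq> 1"
      hence "x a = 0" using Dsub a(1) unfolding x_def by (auto split: if_splits)
      moreover have "x b0 < x a" using a b0 by blast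
      moreover have "x b0 = 0 \<or> x b0 = 1" using Dsub b0(1) unfolding x_def by auto
      ultimately show False by auto
    qed
    have others: "\<forall>b\<in>D. b \<noteq> a \<longrightarrow> b \<in> C \<and> b \<noteq> i"
    proof (intro ballI impI)
      fix b assume "b \<in> D" "b \<noteq> a"
      hence "x b < 1" using a xa by metis
      thus "b \<in> C \<and> b \<noteq> i" using Dsub \<open>b \<in> D\<close> unfolding x_def by (auto split: if_splits)
    qed
    have aC: "a \<notin> C"
    proof
      assume "a \<in> C"
      hence "D \<subseteq> C" using others by auto
      thus False using inc[OF DC assms(4)] DneC by blast
    qed
    define D' where "D' = D - {a}"
    have D'C: "D' \<subseteq> C" using others D'_def by blast
    have D'ne: "D' \<noteq> {}" using b0 D'_def by blast
    have Deq: "D = insert a D'" using D'_def a(1) by blast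
    obtain C3 where C3: "C3 \<in> \<C>" "C3 \<subseteq> (C - D) \<union> (D - C)"
      using bin_symdiff[OF assms(2) assms(4) DC] DneC by metis
    have C3s: "C3 \<subseteq> (C - D') \<union> {a}" using C3(2) Deq aC D'C by blast
    have aC3: "a \<in> C3"
    proof (rule ccontr)
      assume "a \<notin> C3"
      hence "C3 \<subseteq> C - D'" using C3s by auto
      hence "C3 = C" using inc[OF C3(1) assms(4)] by auto
      thus False using \<open>C3 \<subseteq> C - D'\<close> D'ne D'C by auto
    qed
    have C3eq: "C3 = (C - D') \<union> {a}"
    proof (rule ccontr)
      assume ne: "C3 \<noteq> (C - D') \<union> {a}"
      have "C3 \<noteq> D" using C3s D'ne D'C Deq aC by auto
      then obtain C4 where C4: "C4 \<in> \<C>" "C4 \<subseteq> (C3 - D) \<union> (D - C3)"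
        using bin_symdiff[OF assms(2) C3(1) DC] by metis
      have "C4 \<subseteq> C" using C4(2) C3s Deq aC3 D'C by auto
      hence "C4 = C" using inc[OF C4(1) assms(4)] by auto
      hence "C \<subseteq> (C3 - {a}) \<union> D'" using C4(2) Deq aC3 by auto
      hence "C - D' \<subseteq> C3" by auto
      thus False using ne C3s aC3 by auto
    qed
    have int: "D \<inter> C3 = {a}" unfolding C3eq Deq by blast
    have sd: "(D - C3) \<union> (C3 - D) = C" unfolding C3eq Deq using D'C aC by blast
    have c1: "card (D \<inter> C3) = 1" unfolding int by simp
    show "\<exists>C1\<in>\<C>. \<exists>C2\<in>\<C>. card (C1 \<inter> C2) = 1 \<and> (C1 - C2) \<union> (C2 - C1) = C"
      using DC C3(1) c1 sd by blast
  }
  {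
    assume "\<exists>C1\<in>\<C>. \<exists>C2\<in>\<C>. card (C1 \<inter> C2) = 1 \<and> (C1 - C2) \<union> (C2 - C1) = C"
    then obtain C1 C2 where C12: "C1 \<in> \<C>" "C2 \<in> \<C>" "card (C1 \<inter> C2) = 1"
      "(C1 - C2) \<union> (C2 - C1) = C" by blast
    then obtain e where e: "C1 \<inter> C2 = {e}" using card_1_singletonE by blast
    have C1C: "C1 \<noteq> C" using e C12(4) by blast
    have C2C: "C2 \<noteq> C" using e C12(4) by blast
    have "Vset n (\<C> - {C}) \<subseteq> Vset n \<C>"
    proof
      fix x assume xV: "x \<in> Vset n (\<C> - {C})"
      have xTP: "x \<in> TP n" using xV unfolding Vset_def by blast
      have v1: "x \<in> Vcirc n C1" using xV C12(1) C1C unfolding Vset_def by blast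
      have v2: "x \<in> Vcirc n C2" using xV C12(2) C2C unfolding Vset_def by blast
      have "x \<in> Vcirc n C"
      proof (rule ccontr)
        assume "x \<notin> Vcirc n C"
        then obtain a where a: "a \<in> C" "\<forall>b\<in>C. b \<noteq> a \<longrightarrow> x b < x a"
          using notV[OF xTP fin[OF assms(4)] nemp[OF assms(4)]] by blast
        show False
        proof (cases "a \<in> C1 - C2")
          case True
          show False using dir2_aux[OF e C12(4) True a(2) v1 v2 fin[OF C12(1)] fin[OF C12(2)]] .
        next
          case False
          hence a2: "a \<in> C2 - C1" using a(1) C12(4) by blast
          have e': "C2 \<inter> C1 = {e}" using e by blast
          have sd': "(C2 - C1) \<union> (C1 - C2) = C" using C12(4) by blast
          show False using dir2_aux[OF e' sd' a2 a(2) v2 v1 fin[OF C12(2)] fin[OF C12(1)]] .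
        qed
      qed
      thus "x \<in> Vset n \<C>" using xV unfolding Vset_def by blast
    qed
    hence "tropical_basis n \<C> (\<C> - {C})" unfolding tropical_basis_def Vset_def by blast
    thus "C \<notin> BM n \<C>" unfolding BM_def by blast
  }
qed

end
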